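(* For $d\ge1$ let $\tilde{\mathcal T}_d:[0,1]\to\mathbb R$ be defined by $\tilde{\mathcal T}_d(x)=\frac{1}{d+1}\frac{\partial}{\partial q}F^{(d)}_q(x)\big|_{q=1/(d+1)}$. Then $$\lim_{d\to\infty}\ \sup_{x\in[0,1]}\big|\tilde{\mathcal T}_d(x)-x(1-x)\big|=0.$$
   Context: Fix $d\ge1$. For $q\in(0,1)$ let $t_q\in(0,1)$ be the unique solution in $(0,1)$ of $q^d+q^{d-1}t+\dots+t^d=q^{d-1}$ (so $t_q=q$ when $q=1/(d+1)$). Let $\nu^{(d)}_q$ be the product measure on $\{0,1,\dots,d\}^{\mathbb N}$ with i.i.d. coordinates, $\nu^{(d)}_q(\omega_i=m)=t_q^m/q^{m-1}$ for $m=0,\dots,d$. Let $F^{(d)}_q(x)=\nu^{(d)}_q\big(\{\omega:\sum_{i\ge1}\omega_i(d+1)^{-i}\le x\}\big)$, $x\in[0,1]$. Equivalently, writing $x=\sum_j\omega_j(d+1)^{-j}$ in base $d+1$ and $b=t_q/q$, $F^{(d)}_q(x)=\sum_{j\ge1}\big(\sum_{i=0}^{\omega_j-1}b^i\big)q^jb^{s^1_j+2s^2_j+\dots+ds^d_j-\omega_j}$, where $s^m_j$ is the number of occurrences of $m$ among $\omega_1,\dots,\omega_j$. (For $d=1$, $2\tilde{\mathcal T}_1$ is the Takagi function.) *)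

theory Defs
  imports "HOL-Probability.Probability"
begin

definition t_sol :: "nat \<Rightarrow> real \<Rightarrow> real" where
  "t_sol d q = (THE t. 0 < t \<and> t < 1 \<and> (\<Sum>k\<le>d. q ^ (d - k) * t ^ k) = q ^ (d - 1))"

definition digit_pmf :: "nat \<Rightarrow> real \<Rightarrow> nat pmf" where
  "digit_pmf d q = embed_pmf (\<lambda>m. if m \<le> d then t_sol d q ^ m * q / q ^ m else 0)"

text \<open>The i.i.d. product measure nu_q^(d); coordinate i (0-based) is omega_(i+1).\<close>
definition nu :: "nat \<Rightarrow> real \<Rightarrow> (nat \<Rightarrow> nat) measure" where
  "nu d q = (\<Pi>\<^sub>M i\<in>(UNIV::nat set). measure_pmf (digit_pmf d q))"

definition F :: "nat \<Rightarrow> real \<Rightarrow> real \<Rightarrow> real" where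
  "F d q x = measure (nu d q)
     {\<omega> \<in> space (nu d q). (\<Sum>i. real (\<omega> i) / real (d + 1) ^ Suc i) \<le> x}"

definition Ttilde :: "nat \<Rightarrow> real \<Rightarrow> real" where
  "Ttilde d x = 1 / real (d + 1) * deriv (\<lambda>q. F d q x) (1 / real (d + 1))"

end

theory Submission
  imports Defs
begin


definition gp :: "nat \<Rightarrow> real \<Rightarrow> real" where "gp d b = (\<Sum>m\<le>d. b ^ m)"
definition binv :: "nat \<Rightarrow> real \<Rightarrow> real" where "binv d y = (THE b. 0 < b \<and> gp d b = y)"
definition P :: "nat \<Rightarrow> real \<Rightarrow> nat \<Rightarrow> real" where "P d q m = q * binv d (1 / q) ^ m"

lemma gp_strict:
  assumes "d \<ge> 1" "0 \<le> b" "b < c" shows "gp d b < gp d c"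
  unfolding gp_def
proof (rule sum_strict_mono_ex1)
  show "\<forall>x\<in>{..d}. b ^ x \<le> c ^ x" using assms by (auto intro: power_mono)
  show "\<exists>a\<in>{..d}. b ^ a < c ^ a" using assms by (intro bexI[of _ 1]) auto
qed simp

lemma gp_ge: assumes "d \<ge> 1" "0 \<le> b" shows "gp d b \<ge> 1 + b"
proof -
  have "(\<Sum>m\<in>{0,1}. b ^ m) \<le> (\<Sum>m\<le>d. b ^ m)"
    using assms by (intro sum_mono2) auto
  thus ?thesis by (simp add: gp_def)
qed

lemma gp_0: "gp d 0 = 1"
  by (simp add: gp_def power_0_left sum.atMost_shift)

lemma gp_1: "gp d 1 = real d + 1"
  by (simp add: gp_def)

lemma isCont_gp: "isCont (gp d) x"
  unfolding gp_def by (intro continuous_intros)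

lemma binv_unique:
  assumes "d \<ge> 1" "0 < b" "gp d b = y" shows "binv d y = b"
  unfolding binv_def
proof (rule the_equality)
  show "0 < b \<and> gp d b = y" using assms by auto
  fix c assume c: "0 < c \<and> gp d c = y"
  show "c = b"
  proof (rule ccontr)
    assume "c \<noteq> b"
    hence "c < b \<or> b < c" by auto
    thus False using gp_strict[OF assms(1), of c b] gp_strict[OF assms(1), of b c] c assms by auto
  qed
qed

lemma binv_ex:
  assumes "d \<ge> 1" "y > 1" shows "0 < binv d y \<and> gp d (binv d y) = y"
proof -
  have "\<exists>x\<ge>0. x \<le> y \<and> gp d x = y"
    using gp_0[of d] gp_ge[OF assms(1), of y] assms
    by (intro IVT) (auto intro: isCont_gp)
  then obtain x where x: "0 \<le> x" "gp d x = y" by blast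
  have "x \<noteq> 0" using x gp_0[of d] assms by auto
  hence "x > 0" using x by auto
  thus ?thesis using binv_unique[OF assms(1) \<open>x > 0\<close> x(2)] x by simp
qed

lemma gauss_real: "(\<Sum>m\<le>d. real m) = real d * (real d + 1) / 2"
  by (induction d) (auto simp: field_simps)

lemma gauss_real_lt: "(\<Sum>m<k. real m) = real k * (real k - 1) / 2"
  by (induction k) (auto simp: field_simps)

lemma DERIV_gp: "DERIV (gp d) x :> (\<Sum>m\<le>d. real m * x ^ (m - 1))"
  unfolding gp_def[abs_def]
  by (auto intro!: derivative_eq_intros)

lemma binv_gp: assumes "d \<ge> 1" "z > 0" shows "binv d (gp d z) = z"
  using binv_unique[OF assms] by simp

lemma binv_B: assumes "d \<ge> 1" shows "binv d (real d + 1) = 1"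
  using binv_gp[OF assms, of 1] gp_1 by simp

lemma isCont_binv: assumes "d \<ge> 1" shows "isCont (binv d) (real d + 1)"
proof -
  have pos: "\<And>z::real. \<bar>z - 1\<bar> \<le> 1/2 \<Longrightarrow> 0 < z" by arith
  have "isCont (binv d) (gp d 1)"
    by (rule isCont_inverse_function[where f="gp d" and g="binv d" and x=1 and d="1/2"])
       (auto intro!: binv_gp[OF assms] isCont_gp pos)
  thus ?thesis by (simp add: gp_1)
qed

lemma DERIV_binv:
  assumes "d \<ge> 1"
  shows "DERIV (binv d) (real d + 1) :> inverse (real d * (real d + 1) / 2)"
proof -
  have D: "DERIV (gp d) (binv d (real d + 1)) :> real d * (real d + 1) / 2"
    using DERIV_gp[of d 1] by (simp add: binv_B[OF assms] gauss_real)
  show ?thesis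
    by (rule DERIV_inverse_function[where f="gp d" and g="binv d", OF D, where a=1 and b="real d + 2"])
       (use assms binv_ex in \<open>auto intro: isCont_binv\<close>)
qed

lemma t_sol_eq:
  assumes "d \<ge> 1" "0 < q" "q < 1"
  shows "t_sol d q = q * binv d (1 / q)"
proof -
  have y: "1 / q > 1" using assms by simp
  from binv_ex[OF assms(1) y] have b: "0 < binv d (1/q)" "gp d (binv d (1/q)) = 1/q" by auto
  define b where "b = binv d (1/q)"
  have key: "(\<Sum>k\<le>d. q ^ (d - k) * (q * c) ^ k) = q ^ d * gp d c" for c
    unfolding gp_def sum_distrib_left
    by (rule sum.cong) (auto simp: power_mult_distrib power_add[symmetric])
  have qd: "q ^ d = q * q ^ (d - 1)" using assms(1) by (cases d) auto
  show ?thesis unfolding t_sol_def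
  proof (rule the_equality)
    have "b < 1 / q" using gp_ge[OF assms(1), of b] b b_def by auto
    hence "q * b < 1" using assms by (simp add: field_simps)
    thus "0 < q * binv d (1 / q) \<and> q * binv d (1 / q) < 1 \<and>
      (\<Sum>k\<le>d. q ^ (d - k) * (q * binv d (1 / q)) ^ k) = q ^ (d - 1)"
      using b assms by (auto simp: key b_def qd)
  next
    fix t assume t: "0 < t \<and> t < 1 \<and> (\<Sum>k\<le>d. q ^ (d - k) * t ^ k) = q ^ (d - 1)"
    have tq: "t = q * (t / q)" using assms by simp
    have "q ^ d * gp d (t/q) = q ^ (d-1)" using t key[of "t/q"] tq by metis
    hence "gp d (t/q) = 1/q" using assms by (simp add: qd field_simps)
    hence "binv d (1/q) = t / q" using binv_unique[OF assms(1), of "t/q"] t assms by simp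
    thus "t = q * binv d (1 / q)" using assms by simp
  qed
qed

lemma P_sum: assumes "d \<ge> 1" "0 < q" "q < 1" shows "(\<Sum>m\<le>d. P d q m) = 1"
proof -
  have "1 / q > 1" using assms by simp
  from binv_ex[OF assms(1) this] show ?thesis
    using assms by (simp add: P_def gp_def sum_distrib_left[symmetric])
qed

lemma P_nonneg: assumes "d \<ge> 1" "0 < q" "q < 1" shows "P d q m \<ge> 0"
proof -
  have "1 / q > 1" using assms by simp
  from binv_ex[OF assms(1) this] show ?thesis using assms by (simp add: P_def)
qed

lemma pmf_digit:
  assumes "d \<ge> 1" "0 < q" "q < 1"
  shows "pmf (digit_pmf d q) m = (if m \<le> d then P d q m else 0)"
proof -
  have f: "(\<lambda>m. if m \<le> d then t_sol d q ^ m * q / q ^ m else 0) = (\<lambda>m. if m \<le> d then P d q m else 0)"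
    using assms by (auto simp: t_sol_eq P_def power_mult_distrib)
  have "(\<integral>\<^sup>+ x. ennreal (if x \<le> d then P d q x else 0) \<partial>count_space UNIV) = (\<Sum>x\<le>d. ennreal (if x \<le> d then P d q x else 0))"
    by (rule nn_integral_count_space') auto
  also have "\<dots> = ennreal (\<Sum>x\<le>d. P d q x)"
    using P_nonneg[OF assms] by (subst sum_ennreal[symmetric]) auto
  also have "\<dots> = 1" using P_sum[OF assms] by simp
  finally show ?thesis unfolding digit_pmf_def f
    by (subst pmf_embed_pmf) (auto simp: P_nonneg[OF assms])
qed

lemma DERIV_P:
  assumes "d \<ge> 1"
  shows "DERIV (\<lambda>q. P d q m) (1 / (real d + 1)) :> 1 - 2 * real m / real d"
proof -
  let ?q0 = "1 / (real d + 1)"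
  have inv: "DERIV (\<lambda>q. 1 / q) ?q0 :> - ((real d + 1) * (real d + 1))"
    by (auto intro!: derivative_eq_intros simp: field_simps)
  have b: "DERIV (\<lambda>q. binv d (1 / q)) ?q0 :> inverse (real d * (real d + 1) / 2) * (- ((real d + 1) * (real d + 1)))"
  proof -
    have "DERIV (\<lambda>q. binv d (1 / q)) ?q0 :> inverse (real d * (real d + 1) / 2) * (- ((real d + 1) * (real d + 1)))"
      using DERIV_chain2[OF _ inv, of "binv d" "inverse (real d * (real d + 1) / 2)"] DERIV_binv[OF assms] by simp
    thus ?thesis .
  qed
  have DD: "DERIV (\<lambda>q. q * binv d (1 / q) ^ m) ?q0 :>
      1 * binv d (1 / ?q0) ^ m + ?q0 * (real m * binv d (1 / ?q0) ^ (m - 1) * (inverse (real d * (real d + 1) / 2) * (- ((real d + 1) * (real d + 1)))))"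
  proof -
    have b2: "DERIV (\<lambda>q. binv d (1 / q) ^ m) ?q0 :> real m * binv d (1 / ?q0) ^ (m - Suc 0) * (inverse (real d * (real d + 1) / 2) * (- ((real d + 1) * (real d + 1))))"
      using DERIV_chain2[OF DERIV_pow b] by simp
    show ?thesis using DERIV_mult[OF DERIV_ident b2] by (simp add: mult.commute)
  qed
  have "1 * binv d (1 / ?q0) ^ m + ?q0 * (real m * binv d (1 / ?q0) ^ (m - 1) * (inverse (real d * (real d + 1) / 2) * (- ((real d + 1) * (real d + 1))))) = 1 - 2 * real m / real d"
  proof -
    have bb: "binv d (1 / ?q0) = 1" "binv d (1 + real d) = 1" using binv_B[OF assms] by (simp_all add: add.commute)
    have dp: "real d > 0" using assms by simp
    have dn: "real d + (real d * (real d * real d) + real d * (real d * 2)) \<noteq> 0" using dp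
      by (metis add_pos_pos less_irrefl mult_pos_pos zero_less_numeral)
    show ?thesis using dp dn by (simp add: bb field_simps)
  qed
  with DD show ?thesis unfolding P_def by simp
qed



definition X :: "nat \<Rightarrow> (nat \<Rightarrow> nat) \<Rightarrow> real" where
  "X d \<omega> = (\<Sum>i. real (\<omega> i) / real (d + 1) ^ Suc i)"

lemma geom_sum_d: assumes "d \<ge> 1" shows "(\<lambda>i. real d / real (d+1) ^ Suc i) sums 1"
proof -
  have "(\<lambda>i. (1 / real (d+1)) ^ i) sums (1 / (1 - 1 / real (d+1)))"
    using assms by (intro geometric_sums) auto
  hence "(\<lambda>i. (real d / real (d+1)) * (1 / real (d+1)) ^ i) sums ((real d / real (d+1)) * (1 / (1 - 1 / real (d+1))))"
    by (rule sums_mult)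
  moreover have "(real d / real (d+1)) * (1 / (1 - 1 / real (d+1))) = 1"
  proof -
    have h: "real d > 0" using assms by simp
    hence "real d + real d * real d > 0" by (simp add: add_pos_pos)
    thus ?thesis using h by (simp add: field_simps)
  qed
  moreover have "(\<lambda>i. (real d / real (d+1)) * (1 / real (d+1)) ^ i) = (\<lambda>i. real d / real (d+1) ^ Suc i)"
    using assms by (auto simp: field_simps power_divide)
  ultimately show ?thesis by simp
qed

lemma X_bounds:
  assumes "d \<ge> 1" "\<forall>i. \<omega> i \<le> d"
  shows "summable (\<lambda>i. real (\<omega> i) / real (d + 1) ^ Suc i)" "0 \<le> X d \<omega>" "X d \<omega> \<le> 1"
proof -
  have le: "real (\<omega> i) / real (d + 1) ^ Suc i \<le> real d / real (d+1) ^ Suc i" for i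
    using assms by (intro divide_right_mono) auto
  have s1: "summable (\<lambda>i. real d / real (d+1) ^ Suc i)" using geom_sum_d[OF assms(1)] by (rule sums_summable)
  show s: "summable (\<lambda>i. real (\<omega> i) / real (d + 1) ^ Suc i)"
    by (rule summable_comparison_test'[OF s1]) (use le in auto)
  show "0 \<le> X d \<omega>" unfolding X_def by (intro suminf_nonneg s) auto
  have "X d \<omega> \<le> (\<Sum>i. real d / real (d+1) ^ Suc i)"
    unfolding X_def by (intro suminf_le s s1 le)
  thus "X d \<omega> \<le> 1" using geom_sum_d[OF assms(1)] sums_unique by fastforce
qed

lemma X_cons:
  assumes "d \<ge> 1" "\<forall>i. \<omega> i \<le> d"
  shows "X d (case_nat m \<omega>) = real m / real (d+1) + X d \<omega> / real (d+1)"
proof -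
  let ?f = "\<lambda>i. real (case_nat m \<omega> i) / real (d + 1) ^ Suc i"
  have s: "summable (\<lambda>i. real (\<omega> i) / real (d + 1) ^ Suc i)" using X_bounds[OF assms] by simp
  have eq: "(\<lambda>i. ?f (Suc i)) = (\<lambda>i. (real (\<omega> i) / real (d + 1) ^ Suc i) / real (d+1))"
    by (auto simp: field_simps)
  have sf: "summable (\<lambda>i. ?f (Suc i))" unfolding eq by (intro summable_divide s)
  have sf': "summable ?f" using summable_Suc_iff[of ?f] sf by blast
  have "(\<Sum>i. ?f (Suc i)) = suminf ?f - ?f 0" by (rule suminf_split_head[OF sf'])
  moreover have "(\<Sum>i. ?f (Suc i)) = X d \<omega> / real (d+1)"
    unfolding eq X_def by (rule suminf_divide[OF s])
  ultimately show ?thesis unfolding X_def by simp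
qed



lemma F_FE:
  assumes d: "d \<ge> 1" and q: "0 < q" "q < 1"
  shows "F d q x = (\<Sum>m\<le>d. P d q m * F d q (real (d+1) * x - real m))"
    and "x < 0 \<Longrightarrow> F d q x = 0"
    and "x \<ge> 1 \<Longrightarrow> F d q x = 1"
    and "0 \<le> F d q x" "F d q x \<le> 1"
proof -
  define p where "p = digit_pmf d q"
  define S where "S = PiM (UNIV::nat set) (\<lambda>_. measure_pmf p)"
  interpret S: sequence_space "measure_pmf p" by unfold_locales
  have nuS: "nu d q = S" by (simp add: nu_def S_def p_def)
  have FX: "F d q y = measure S {\<omega> \<in> space S. X d \<omega> \<le> y}" for y
    by (simp add: F_def nuS X_def)
  have Xm[measurable]: "X d \<in> borel_measurable S" unfolding X_def S_def by measurable
  have sets_A[measurable]: "{\<omega> \<in> space S. X d \<omega> \<le> y} \<in> sets S" for y by measurable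
  have pmfp: "pmf p m = (if m \<le> d then P d q m else 0)" for m
    unfolding p_def by (rule pmf_digit[OF d q])
  have setp: "set_pmf p \<subseteq> {..d}" by (auto simp: set_pmf_iff pmfp split: if_splits)
  have AEb: "AE \<omega> in S. \<forall>i. \<omega> i \<le> d"
    unfolding AE_all_countable S_def
  proof
    fix i :: nat
    have "AE m in measure_pmf p. m \<le> d" using setp by (auto simp: AE_measure_pmf_iff)
    thus "AE \<omega> in Pi\<^sub>M UNIV (\<lambda>_. measure_pmf p). \<omega> i \<le> d" using S.AE_component[of i "\<lambda>m. m \<le> d"] by simp
  qed
  show "0 \<le> F d q x" by (simp add: FX)
  show "F d q x \<le> 1" unfolding FX S_def by (rule S.prob_le_1)
  show "x < 0 \<Longrightarrow> F d q x = 0"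
  proof -
    assume x: "x < 0"
    have "measure S {\<omega> \<in> space S. X d \<omega> \<le> x} = measure S {}"
      by (rule measure_eq_AE) (use AEb x in \<open>auto elim!: eventually_mono dest!: X_bounds(2)[OF d]\<close>)
    thus ?thesis by (simp add: FX)
  qed
  show "x \<ge> 1 \<Longrightarrow> F d q x = 1"
  proof -
    assume x: "x \<ge> 1"
    have "measure S {\<omega> \<in> space S. X d \<omega> \<le> x} = measure S (space S)"
      by (rule measure_eq_AE) (use AEb x in \<open>auto elim!: eventually_mono dest!: X_bounds(3)[OF d]\<close>)
    thus ?thesis using S.P.prob_space by (simp add: FX S_def)
  qed
  show "F d q x = (\<Sum>m\<le>d. P d q m * F d q (real (d+1) * x - real m))"
  proof -
    let ?M = "measure_pmf p"
    let ?f = "\<lambda>(s::nat, \<omega>::nat\<Rightarrow>nat). case_nat s \<omega>"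
    define E where "E = ?f -` {\<omega> \<in> space S. X d \<omega> \<le> x} \<inter> space (?M \<Otimes>\<^sub>M S)"
    have fm[measurable]: "?f \<in> ?M \<Otimes>\<^sub>M S \<rightarrow>\<^sub>M S" unfolding S_def by measurable
    have Em: "E \<in> sets (?M \<Otimes>\<^sub>M S)" unfolding E_def by measurable
    have "F d q x = measure (distr (?M \<Otimes>\<^sub>M S) S ?f) {\<omega> \<in> space S. X d \<omega> \<le> x}"
      unfolding FX S_def S.PiM_iter ..
    also have "\<dots> = measure (?M \<Otimes>\<^sub>M S) E"
      unfolding E_def by (rule measure_distr[OF fm]) measurable
    finally have F1: "F d q x = measure (?M \<Otimes>\<^sub>M S) E" .
    have pre: "Pair s -` E = {\<omega> \<in> space S. X d (case_nat s \<omega>) \<le> x}" for s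
      by (auto simp: E_def space_pair_measure S_def space_PiM)
    have pre_m: "Pair s -` E \<in> sets S" for s
    proof -
      have [measurable]: "(\<lambda>\<omega>. case_nat s \<omega>) \<in> S \<rightarrow>\<^sub>M S" unfolding S_def by measurable
      show ?thesis unfolding pre by measurable
    qed
    have pre_F: "emeasure S (Pair s -` E) = ennreal (F d q (real (d+1) * x - real s))" for s
    proof -
      have "emeasure S (Pair s -` E) = emeasure S {\<omega> \<in> space S. X d \<omega> \<le> real (d+1) * x - real s}"
      proof (rule emeasure_eq_AE)
        show "AE \<omega> in S. (\<omega> \<in> Pair s -` E) = (\<omega> \<in> {\<omega> \<in> space S. X d \<omega> \<le> real (d + 1) * x - real s})"
          using AEb
        proof (rule eventually_mono)
          fix \<omega> :: "nat \<Rightarrow> nat" assume b: "\<forall>i. \<omega> i \<le> d"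
          have "X d (case_nat s \<omega>) \<le> x \<longleftrightarrow> X d \<omega> \<le> real (d + 1) * x - real s"
          proof -
            have "X d (case_nat s \<omega>) = (real s + X d \<omega>) / real (d+1)"
              using X_cons[OF d b, of s] by (simp add: add_divide_distrib)
            moreover have "(real s + X d \<omega>) / real (d+1) \<le> x \<longleftrightarrow> real s + X d \<omega> \<le> x * real (d+1)"
              by (rule pos_divide_le_eq) simp
            ultimately show ?thesis by (auto simp: algebra_simps)
          qed
          thus "(\<omega> \<in> Pair s -` E) = (\<omega> \<in> {\<omega> \<in> space S. X d \<omega> \<le> real (d + 1) * x - real s})"
            unfolding pre by (simp add: S_def space_PiM)
        qed
      qed (use pre_m in auto)
      also have "\<dots> = ennreal (F d q (real (d+1) * x - real s))"
        unfolding FX by (simp add: S.P.emeasure_eq_measure S_def)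
      finally show ?thesis .
    qed
    have "emeasure (?M \<Otimes>\<^sub>M S) E = (\<integral>\<^sup>+ s. emeasure S (Pair s -` E) \<partial>?M)"
      unfolding S_def by (rule S.emeasure_pair_measure_alt) (use Em in \<open>simp only: S_def\<close>)
    also have "\<dots> = (\<Sum>s\<in>{..d}. emeasure S (Pair s -` E) * pmf p s)"
      by (rule nn_integral_measure_pmf_support) (use setp in auto)
    also have "\<dots> = (\<Sum>s\<le>d. ennreal (P d q s * F d q (real (d+1) * x - real s)))"
      by (rule sum.cong) (auto simp: pre_F pmfp ennreal_mult' P_nonneg[OF d q] mult.commute)
    also have "\<dots> = ennreal (\<Sum>s\<le>d. P d q s * F d q (real (d+1) * x - real s))"
      by (rule sum_ennreal) (use P_nonneg[OF d q] FX in auto)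
    finally have "emeasure (?M \<Otimes>\<^sub>M S) E = ennreal (\<Sum>s\<le>d. P d q s * F d q (real (d+1) * x - real s))" .
    moreover have "(\<Sum>s\<le>d. P d q s * F d q (real (d+1) * x - real s)) \<ge> 0"
      by (rule sum_nonneg) (use P_nonneg[OF d q] FX in auto)
    ultimately show ?thesis unfolding F1 measure_def by simp
  qed
qed



lemma contract:
  fixes E T :: "real \<Rightarrow> real"
  assumes B: "B > 1" and c: "c \<ge> 0" and M: "\<And>x. \<bar>E x\<bar> \<le> M"
    and rec: "\<And>x. \<bar>E x\<bar> \<le> c + \<bar>E (T x)\<bar> / B"
  shows "\<bar>E x\<bar> \<le> c * B / (B - 1)"
proof -
  have ind: "\<forall>x. \<bar>E x\<bar> \<le> c * B / (B - 1) + M / B ^ n" for n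
  proof (induction n)
    case 0
    have "c * B / (B - 1) \<ge> 0" using B c by simp
    show ?case
    proof
      fix x
      have "\<bar>E x\<bar> \<le> M" by (rule M)
      thus "\<bar>E x\<bar> \<le> c * B / (B - 1) + M / B ^ 0" using \<open>c * B / (B - 1) \<ge> 0\<close> by simp
    qed
  next
    case (Suc n)
    show ?case
    proof
      fix x
      have "\<bar>E x\<bar> \<le> c + \<bar>E (T x)\<bar> / B" by (rule rec)
      also have "\<dots> \<le> c + (c * B / (B - 1) + M / B ^ n) / B"
        using Suc B by (intro add_left_mono divide_right_mono) auto
      also have "\<dots> = c * B / (B - 1) + M / B ^ Suc n"
        using B by (simp add: field_simps)
      finally show "\<bar>E x\<bar> \<le> c * B / (B - 1) + M / B ^ Suc n" .
    qed
  qed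
  have lim: "(\<lambda>n. c * B / (B - 1) + M / B ^ n) \<longlonglongrightarrow> c * B / (B - 1) + 0"
    by (intro tendsto_intros LIMSEQ_divide_realpow_zero B)
  show ?thesis
    by (rule LIMSEQ_le[OF tendsto_const lim[simplified]]) (use ind in auto)
qed

definition F0 :: "real \<Rightarrow> real" where "F0 y = max 0 (min 1 y)"
definition Tm :: "nat \<Rightarrow> real \<Rightarrow> real" where "Tm d x = real (d+1) * x - of_int \<lfloor>real (d+1) * x\<rfloor>"

lemma Tm_range: "0 \<le> Tm d x" "Tm d x < 1"
  unfolding Tm_def by linarith+

lemma digit_facts:
  fixes d :: nat
  assumes "0 \<le> x" "x < 1"
  defines "k \<equiv> nat \<lfloor>real (d+1) * x\<rfloor>"
  shows "k \<le> d" "real k \<le> real (d+1) * x" "real (d+1) * x < real k + 1" "Tm d x = real (d+1) * x - real k"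
proof -
  have nn: "0 \<le> real (d+1) * x" using assms by simp
  have "real (d+1) * x < real (d+1)" using assms by simp
  have fl: "of_int \<lfloor>real (d+1) * x\<rfloor> = real k" unfolding k_def using nn by simp
  show "real k \<le> real (d+1) * x" "real (d+1) * x < real k + 1" using fl by linarith+
  thus "k \<le> d" using \<open>real (d+1) * x < real (d+1)\<close> by linarith
  show "Tm d x = real (d+1) * x - real k" unfolding Tm_def fl ..
qed

lemma split_sum:
  fixes f a :: "nat \<Rightarrow> real"
  assumes "k \<le> d" "\<And>m. m < k \<Longrightarrow> f m = a m" "\<And>m. k < m \<Longrightarrow> m \<le> d \<Longrightarrow> f m = 0"
  shows "(\<Sum>m\<le>d. f m) = (\<Sum>m<k. a m) + f k"
proof -
  have U: "{..d} = {..<k} \<union> ({k} \<union> {k<..d})" using assms(1) by auto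
  have "(\<Sum>m\<le>d. f m) = (\<Sum>m<k. f m) + (f k + (\<Sum>m\<in>{k<..d}. f m))"
    unfolding U by (subst sum.union_disjoint; auto)+
  also have "(\<Sum>m\<in>{k<..d}. f m) = 0" using assms(3) by (intro sum.neutral) auto
  also have "(\<Sum>m<k. f m) = (\<Sum>m<k. a m)" using assms(2) by (intro sum.cong) auto
  finally show ?thesis by simp
qed

lemma step_sum:
  fixes g :: "real \<Rightarrow> real" and w :: "nat \<Rightarrow> real"
  assumes "0 \<le> x" "x < 1"
    and g1: "\<And>y. y \<ge> 1 \<Longrightarrow> g y = 1" and g0: "\<And>y. y < 0 \<Longrightarrow> g y = 0"
  shows "(\<Sum>m\<le>d. w m * g (real (d+1) * x - real m)) =
     (\<Sum>m<nat \<lfloor>real (d+1) * x\<rfloor>. w m) + w (nat \<lfloor>real (d+1) * x\<rfloor>) * g (Tm d x)"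
proof -
  define k where "k = nat \<lfloor>real (d+1) * x\<rfloor>"
  note df = digit_facts[where d=d, OF assms(1,2), folded k_def]
  have "(\<Sum>m\<le>d. w m * g (real (d+1) * x - real m)) = (\<Sum>m<k. w m) + w k * g (real (d+1) * x - real k)"
  proof (rule split_sum[OF df(1)])
    fix m assume "m < k"
    hence "real m + 1 \<le> real k" by simp
    hence "real (d+1) * x - real m \<ge> 1" using df by linarith
    thus "w m * g (real (d+1) * x - real m) = w m" using g1 by simp
  next
    fix m assume "k < m" "m \<le> d"
    hence "real k + 1 \<le> real m" by simp
    hence "real (d+1) * x - real m < 0" using df by linarith
    thus "w m * g (real (d+1) * x - real m) = 0" using g0 by simp
  qed
  thus ?thesis unfolding k_def[symmetric] df(4) .
qed

lemma F0_1: "y \<ge> 1 \<Longrightarrow> F0 y = 1" and F0_0: "y < 0 \<Longrightarrow> F0 y = 0"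
  and F0_id: "0 \<le> y \<Longrightarrow> y \<le> 1 \<Longrightarrow> F0 y = y" and F0_abs: "\<bar>F0 y\<bar> \<le> 1"
  by (auto simp: F0_def)

lemma F0_FE:
  assumes "0 \<le> x" "x < 1"
  shows "F0 x = (real (nat \<lfloor>real (d+1) * x\<rfloor>) + F0 (Tm d x)) / real (d+1)"
proof -
  note df = digit_facts[where d=d, OF assms]
  have "F0 (Tm d x) = Tm d x" using Tm_range[of d x] by (simp add: F0_id less_imp_le)
  hence e: "real (nat \<lfloor>real (d+1) * x\<rfloor>) + F0 (Tm d x) = real (d+1) * x" using df(4) by simp
  show ?thesis unfolding e using assms by (simp add: F0_id)
qed



lemma P_q0: assumes "d \<ge> 1" shows "P d (1 / real (d+1)) m = 1 / real (d+1)"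
proof -
  have "binv d (1 / (1 / real (d+1))) = 1" using binv_B[OF assms] by (simp add: add.commute)
  thus ?thesis by (simp add: P_def)
qed

lemma abs_helper:
  fixes a s r c B :: real
  assumes "a = s + r / B" "\<bar>s\<bar> \<le> c" "B > 0"
  shows "\<bar>a\<bar> \<le> c + \<bar>r\<bar> / B"
proof -
  have "\<bar>a\<bar> \<le> \<bar>s\<bar> + \<bar>r / B\<bar>" unfolding assms(1) by (rule abs_triangle_ineq)
  also have "\<bar>r / B\<bar> = \<bar>r\<bar> / B" using assms(3) by simp
  finally show ?thesis using assms(2) by simp
qed

lemma F_outside:
  assumes d: "d \<ge> 1" and q: "0 < q" "q < 1" and y: "\<not> (0 \<le> y \<and> y < 1)"
  shows "F d q y = F0 y"
proof (cases "y < 0")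
  case True thus ?thesis using F_FE(2)[OF d q] by (simp add: F0_0)
next
  case False thus ?thesis using y F_FE(3)[OF d q] by (simp add: F0_1)
qed

lemma F_key:
  assumes d: "d \<ge> 1" and q: "0 < q" "q < 1" and x: "0 \<le> x" "x < 1"
  shows "F d q x - F0 x = (\<Sum>m\<le>d. (P d q m - 1 / real (d+1)) * F d q (real (d+1) * x - real m))
           + (F d q (Tm d x) - F0 (Tm d x)) / real (d+1)"
proof -
  let ?k = "nat \<lfloor>real (d+1) * x\<rfloor>"
  let ?y = "\<lambda>m. real (d+1) * x - real m"
  have st: "(\<Sum>m\<le>d. 1 * F d q (?y m)) = (\<Sum>m<?k. 1) + 1 * F d q (Tm d x)"
    by (rule step_sum[OF x]) (use F_FE(2,3)[OF d q] in auto)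
  have "F d q x = (\<Sum>m\<le>d. P d q m * F d q (?y m))" by (rule F_FE(1)[OF d q])
  also have "\<dots> = (\<Sum>m\<le>d. (P d q m - 1 / real (d+1)) * F d q (?y m)) + (\<Sum>m\<le>d. 1 * F d q (?y m)) / real (d+1)"
    by (simp add: sum.distrib[symmetric] sum_divide_distrib algebra_simps)
  also have "(\<Sum>m\<le>d. 1 * F d q (?y m)) = real ?k + F d q (Tm d x)" using st by simp
  finally show ?thesis using F0_FE[OF x, of d] by (simp add: add_divide_distrib diff_divide_distrib)
qed

lemma F_q0:
  assumes d: "d \<ge> 1"
  shows "F d (1 / real (d+1)) y = F0 y"
proof -
  let ?q0 = "1 / real (d+1)"
  have q: "0 < ?q0" "?q0 < 1" using d by auto
  let ?E = "\<lambda>y. F d ?q0 y - F0 y"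
  have "\<bar>?E y\<bar> \<le> 0 * real (d+1) / (real (d+1) - 1)"
  proof (rule contract[where T="Tm d" and M=2 and E="\<lambda>y. F d (1 / real (d+1)) y - F0 y"])
    show "1 < real (d+1)" using d by simp
    show "\<bar>?E x\<bar> \<le> 2" for x using F_FE(4,5)[OF d q, of x] F0_abs[of x] by (simp add: abs_le_iff)
    show "\<bar>?E x\<bar> \<le> 0 + \<bar>?E (Tm d x)\<bar> / real (d+1)" for x
    proof (cases "0 \<le> x \<and> x < 1")
      case True
      then show ?thesis using F_key[OF d q, of x] unfolding P_q0[OF d] by simp
    next
      case False
      then show ?thesis using F_outside[OF d q False] by simp
    qed
  qed simp
  thus ?thesis by simp
qed

lemma F_close:
  assumes d: "d \<ge> 1" and q: "0 < q" "q < 1"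
  shows "\<bar>F d q y - F0 y\<bar> \<le> (\<Sum>m\<le>d. \<bar>P d q m - 1 / real (d+1)\<bar>) * real (d+1) / (real (d+1) - 1)"
proof (rule contract[where T="Tm d" and M=2 and E="\<lambda>y. F d q y - F0 y"])
  let ?E = "\<lambda>y. F d q y - F0 y"
  show "1 < real (d+1)" using d by simp
  show "0 \<le> (\<Sum>m\<le>d. \<bar>P d q m - 1 / real (d+1)\<bar>)" by (simp add: sum_nonneg)
  show "\<bar>?E x\<bar> \<le> 2" for x using F_FE(4,5)[OF d q, of x] F0_abs[of x] by (simp add: abs_le_iff)
  show "\<bar>?E x\<bar> \<le> (\<Sum>m\<le>d. \<bar>P d q m - 1 / real (d+1)\<bar>) + \<bar>?E (Tm d x)\<bar> / real (d+1)" for x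
  proof (cases "0 \<le> x \<and> x < 1")
    case True
    have "\<bar>\<Sum>m\<le>d. (P d q m - 1 / real (d+1)) * F d q (real (d+1) * x - real m)\<bar>
        \<le> (\<Sum>m\<le>d. \<bar>(P d q m - 1 / real (d+1)) * F d q (real (d+1) * x - real m)\<bar>)"
      by (rule sum_abs)
    also have "\<dots> \<le> (\<Sum>m\<le>d. \<bar>P d q m - 1 / real (d+1)\<bar>)"
    proof (rule sum_mono)
      fix m
      have "\<bar>F d q (real (d+1) * x - real m)\<bar> \<le> 1" using F_FE(4,5)[OF d q] by (simp add: abs_le_iff)
      thus "\<bar>(P d q m - 1 / real (d+1)) * F d q (real (d+1) * x - real m)\<bar> \<le> \<bar>P d q m - 1 / real (d+1)\<bar>"
        by (simp add: abs_mult mult_left_le)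
    qed
    finally have sb: "\<bar>\<Sum>m\<le>d. (P d q m - 1 / real (d + 1)) * F d q (real (d + 1) * x - real m)\<bar>
       \<le> (\<Sum>m\<le>d. \<bar>P d q m - 1 / real (d + 1)\<bar>)" .
    have eq: "F d q x - F0 x = (\<Sum>m\<le>d. (P d q m - 1 / real (d+1)) * F d q (real (d+1) * x - real m))
           + (F d q (Tm d x) - F0 (Tm d x)) / real (d+1)" using F_key[OF d q] True by blast
    show ?thesis by (rule abs_helper[OF eq sb]) simp
  next
    case False
    then show ?thesis using F_outside[OF d q False] by (simp add: sum_nonneg)
  qed
qed



definition Pd :: "nat \<Rightarrow> nat \<Rightarrow> real" where "Pd d m = 1 - 2 * real m / real d"
definition phi :: "nat \<Rightarrow> real \<Rightarrow> real" where
  "phi d x = (\<Sum>m\<le>d. Pd d m * F0 (real (d+1) * x - real m))"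
definition Kd :: "nat \<Rightarrow> real" where "Kd d = (\<Sum>m\<le>d. \<bar>Pd d m\<bar>)"
definition G0 :: "nat \<Rightarrow> real \<Rightarrow> real" where
  "G0 d x = (\<Sum>n. phi d ((Tm d ^^ n) x) / real (d+1) ^ n)"
definition G :: "nat \<Rightarrow> real \<Rightarrow> real" where
  "G d x = (if 0 \<le> x \<and> x < 1 then G0 d x else 0)"

lemma Kd_nonneg: "Kd d \<ge> 0" unfolding Kd_def by (simp add: sum_nonneg)

lemma phi_bound: "\<bar>phi d x\<bar> \<le> Kd d"
proof -
  have "\<bar>phi d x\<bar> \<le> (\<Sum>m\<le>d. \<bar>Pd d m * F0 (real (d+1) * x - real m)\<bar>)"
    unfolding phi_def by (rule sum_abs)
  also have "\<dots> \<le> Kd d" unfolding Kd_def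
  proof (rule sum_mono)
    fix m
    show "\<bar>Pd d m * F0 (real (d+1) * x - real m)\<bar> \<le> \<bar>Pd d m\<bar>"
      using F0_abs[of "real (d+1) * x - real m"] mult_left_le[of "\<bar>F0 (real (d+1) * x - real m)\<bar>" "\<bar>Pd d m\<bar>"]
      by (simp add: abs_mult)
  qed
  finally show ?thesis .
qed

lemma geo_B: assumes "d \<ge> 1"
  shows "(\<lambda>n. Kd d * (1 / real (d+1)) ^ n) sums (Kd d * (real (d+1) / (real (d+1) - 1)))"
proof -
  have "(\<lambda>n. (1 / real (d+1)) ^ n) sums (1 / (1 - 1 / real (d+1)))"
    using assms by (intro geometric_sums) auto
  hence "(\<lambda>n. Kd d * (1 / real (d+1)) ^ n) sums (Kd d * (1 / (1 - 1 / real (d+1))))"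
    by (rule sums_mult)
  moreover have "1 / (1 - 1 / real (d+1)) = real (d+1) / (real (d+1) - 1)"
    using assms by (simp add: field_simps)
  ultimately show ?thesis by metis
qed

lemma G0_term_le: "norm (phi d ((Tm d ^^ n) x) / real (d+1) ^ n) \<le> Kd d * (1 / real (d+1)) ^ n"
proof -
  have "\<bar>phi d ((Tm d ^^ n) x)\<bar> / real (d+1) ^ n \<le> Kd d / real (d+1) ^ n"
    by (rule divide_right_mono[OF phi_bound]) simp
  thus ?thesis by (simp add: power_one_over)
qed

lemma G0_summable: assumes "d \<ge> 1" shows "summable (\<lambda>n. phi d ((Tm d ^^ n) x) / real (d+1) ^ n)"
  by (rule summable_comparison_test'[OF sums_summable[OF geo_B[OF assms]]]) (use G0_term_le in auto)

lemma G0_bound: assumes "d \<ge> 1" shows "\<bar>G0 d x\<bar> \<le> Kd d * real (d+1) / (real (d+1) - 1)"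
proof -
  have "norm (G0 d x) \<le> (\<Sum>n. Kd d * (1 / real (d+1)) ^ n)"
    unfolding G0_def by (rule norm_suminf_le[OF G0_term_le sums_summable[OF geo_B[OF assms]]])
  also have "\<dots> = Kd d * (real (d+1) / (real (d+1) - 1))" using geo_B[OF assms] by (rule sums_unique[symmetric])
  finally show ?thesis by simp
qed

lemma G_bound: assumes "d \<ge> 1" shows "\<bar>G d x\<bar> \<le> Kd d * real (d+1) / (real (d+1) - 1)"
proof -
  have "0 \<le> Kd d * real (d+1) / (real (d+1) - 1)" using assms Kd_nonneg[of d] by simp
  thus ?thesis using G0_bound[OF assms, of x] by (simp add: G_def)
qed

lemma G0_rec: assumes "d \<ge> 1" shows "G0 d x = phi d x + G0 d (Tm d x) / real (d+1)"
proof -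
  let ?f = "\<lambda>n. phi d ((Tm d ^^ n) x) / real (d+1) ^ n"
  have "(\<Sum>n. ?f (Suc n)) = suminf ?f - ?f 0" by (rule suminf_split_head[OF G0_summable[OF assms]])
  moreover have "(\<lambda>n. ?f (Suc n)) = (\<lambda>n. (phi d ((Tm d ^^ n) (Tm d x)) / real (d+1) ^ n) / real (d+1))"
    by (simp add: funpow_swap1 divide_divide_eq_left mult.commute)
  moreover have "(\<Sum>n. (phi d ((Tm d ^^ n) (Tm d x)) / real (d+1) ^ n) / real (d+1)) = G0 d (Tm d x) / real (d+1)"
    unfolding G0_def by (rule suminf_divide[OF G0_summable[OF assms]])
  ultimately show ?thesis unfolding G0_def by simp
qed

lemma G_rec: assumes "d \<ge> 1" "0 \<le> x" "x < 1" shows "G d x = phi d x + G d (Tm d x) / real (d+1)"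
proof -
  have e1: "G d x = G0 d x" and e2: "G d (Tm d x) = G0 d (Tm d x)" using assms Tm_range[of d x] by (simp_all add: G_def)
  show ?thesis unfolding e1 e2 by (rule G0_rec[OF assms(1)])
qed



lemma DERIV_F:
  assumes d: "d \<ge> 1"
  shows "((\<lambda>q. F d q x) has_real_derivative G d x) (at (1 / real (d+1)))"
proof -
  define q0 where "q0 = 1 / real (d+1)"
  define B where "B = real (d+1)"
  define \<eta> where "\<eta> q = (\<Sum>m\<le>d. \<bar>P d q m - q0\<bar>) * B / (B - 1)" for q
  define Cq where "Cq q = (\<Sum>m\<le>d. \<bar>(P d q m - q0) / (q - q0) - Pd d m\<bar>) + Kd d * \<eta> q" for q
  have B1: "B > 1" using d by (simp add: B_def)
  have q0B: "q0 = 1 / B" by (simp add: q0_def B_def)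
  have \<eta>_nn: "\<eta> q \<ge> 0" for q using B1 by (simp add: \<eta>_def sum_nonneg)
  have Cq_nn: "Cq q \<ge> 0" for q using \<eta>_nn[of q] Kd_nonneg[of d] by (simp add: Cq_def sum_nonneg)
  have bound: "\<bar>(F d q x - F0 x) / (q - q0) - G d x\<bar> \<le> Cq q * B / (B - 1)"
    if q: "0 < q" "q < 1" "q \<noteq> q0" for q
  proof (rule contract[where E="\<lambda>y. (F d q y - F0 y) / (q - q0) - G d y" and T="Tm d" and
        M="2 / \<bar>q - q0\<bar> + Kd d * B / (B - 1)" and c="Cq q" and B=B])
    show "1 < B" by (rule B1)
    show "0 \<le> Cq q" by (rule Cq_nn)
    show "\<bar>(F d q y - F0 y) / (q - q0) - G d y\<bar> \<le> 2 / \<bar>q - q0\<bar> + Kd d * B / (B - 1)" for y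
    proof -
      have "\<bar>F d q y - F0 y\<bar> \<le> 2" using F_FE(4,5)[OF d q(1,2), of y] F0_abs[of y] by (simp add: abs_le_iff)
      hence "\<bar>(F d q y - F0 y) / (q - q0)\<bar> \<le> 2 / \<bar>q - q0\<bar>"
        using q by (simp add: abs_divide divide_right_mono)
      moreover have "\<bar>G d y\<bar> \<le> Kd d * B / (B - 1)" using G_bound[OF d, of y] by (simp add: B_def)
      moreover have "\<bar>(F d q y - F0 y) / (q - q0) - G d y\<bar> \<le> \<bar>(F d q y - F0 y) / (q - q0)\<bar> + \<bar>G d y\<bar>"
        by (rule abs_triangle_ineq4)
      ultimately show ?thesis by linarith
    qed
    show "\<bar>(F d q y - F0 y) / (q - q0) - G d y\<bar>
          \<le> Cq q + \<bar>(F d q (Tm d y) - F0 (Tm d y)) / (q - q0) - G d (Tm d y)\<bar> / B" for y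
    proof (cases "0 \<le> y \<and> y < 1")
      case True
      let ?ym = "\<lambda>m. real (d+1) * y - real m"
      let ?S = "\<Sum>m\<le>d. (P d q m - q0) / (q - q0) * F d q (?ym m)"
      have key: "F d q y - F0 y = (\<Sum>m\<le>d. (P d q m - q0) * F d q (?ym m))
           + (F d q (Tm d y) - F0 (Tm d y)) / B"
        using F_key[OF d q(1,2)] True unfolding q0_def B_def by blast
      have eq: "(F d q y - F0 y) / (q - q0) - G d y
          = (?S - phi d y) + ((F d q (Tm d y) - F0 (Tm d y)) / (q - q0) - G d (Tm d y)) / B"
      proof -
        have "(F d q y - F0 y) / (q - q0) = ?S + ((F d q (Tm d y) - F0 (Tm d y)) / (q - q0)) / B"
          unfolding key by (simp add: add_divide_distrib sum_divide_distrib)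
        moreover have "G d y = phi d y + G d (Tm d y) / B"
          using G_rec[OF d] True unfolding B_def by blast
        ultimately show ?thesis by (simp add: diff_divide_distrib)
      qed
      have Sb: "\<bar>?S - phi d y\<bar> \<le> Cq q"
      proof -
        have eqS: "?S - phi d y = (\<Sum>m\<le>d. ((P d q m - q0) / (q - q0) - Pd d m) * F d q (?ym m)
                 + Pd d m * (F d q (?ym m) - F0 (?ym m)))"
          unfolding phi_def sum_subtractf[symmetric] by (rule sum.cong) (auto simp: algebra_simps)
        have "\<bar>(\<Sum>m\<le>d. ((P d q m - q0) / (q - q0) - Pd d m) * F d q (?ym m)
                 + Pd d m * (F d q (?ym m) - F0 (?ym m)))\<bar> \<le> (\<Sum>m\<le>d. \<bar>((P d q m - q0) / (q - q0) - Pd d m) * F d q (?ym m)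
                 + Pd d m * (F d q (?ym m) - F0 (?ym m))\<bar>)" by (rule sum_abs)
        also have "\<dots> \<le> (\<Sum>m\<le>d. \<bar>(P d q m - q0) / (q - q0) - Pd d m\<bar> + \<bar>Pd d m\<bar> * \<eta> q)"
        proof (rule sum_mono)
          fix m
          have F1: "\<bar>F d q (?ym m)\<bar> \<le> 1" using F_FE(4,5)[OF d q(1,2), of "?ym m"] by (simp add: abs_le_iff)
          have F2: "\<bar>F d q (?ym m) - F0 (?ym m)\<bar> \<le> \<eta> q"
            using F_close[OF d q(1,2), of "?ym m"] unfolding \<eta>_def q0_def B_def .
          have "\<bar>((P d q m - q0) / (q - q0) - Pd d m) * F d q (?ym m)\<bar> \<le> \<bar>(P d q m - q0) / (q - q0) - Pd d m\<bar>"
            unfolding abs_mult by (rule mult_left_le[OF F1 abs_ge_zero])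
          moreover have "\<bar>Pd d m * (F d q (?ym m) - F0 (?ym m))\<bar> \<le> \<bar>Pd d m\<bar> * \<eta> q"
            unfolding abs_mult by (rule mult_left_mono[OF F2 abs_ge_zero])
          ultimately show "\<bar>((P d q m - q0) / (q - q0) - Pd d m) * F d q (?ym m)
                 + Pd d m * (F d q (?ym m) - F0 (?ym m))\<bar>
              \<le> \<bar>(P d q m - q0) / (q - q0) - Pd d m\<bar> + \<bar>Pd d m\<bar> * \<eta> q"
            using abs_triangle_ineq[of "((P d q m - q0) / (q - q0) - Pd d m) * F d q (?ym m)" "Pd d m * (F d q (?ym m) - F0 (?ym m))"] by linarith
        qed
        also have "\<dots> = Cq q" by (simp add: Cq_def Kd_def sum.distrib sum_distrib_right)
        finally show ?thesis unfolding eqS .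
      qed
      show ?thesis by (rule abs_helper[OF eq Sb]) (use B1 in simp)
    next
      case False
      have "F d q y = F0 y" by (rule F_outside[OF d q(1,2) False])
      moreover have "G d y = 0" using False by (auto simp: G_def)
      ultimately show ?thesis using Cq_nn[of q] B1 by simp
    qed
  qed
  have ev: "eventually (\<lambda>q. 0 < q \<and> q < 1 \<and> q \<noteq> q0) (at q0)"
  proof -
    have "0 < q0" "q0 < 1" using B1 by (auto simp: q0B)
    hence "eventually (\<lambda>q. q \<in> {0<..<1}) (at q0)"
      by (intro eventually_at_in_open') auto
    moreover have "eventually (\<lambda>q. q \<noteq> q0) (at q0)" by (rule eventually_neq_at_within)
    ultimately show ?thesis by eventually_elim auto
  qed
  have Pq0: "P d q0 m = q0" for m unfolding q0_def by (rule P_q0[OF d])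
  have lim1: "((\<lambda>q. \<bar>(P d q m - q0) / (q - q0) - Pd d m\<bar>) \<longlongrightarrow> 0) (at q0)" for m
  proof -
    have "((\<lambda>q. (P d q m - P d q0 m) / (q - q0)) \<longlongrightarrow> Pd d m) (at q0)"
      using DERIV_P[OF d, of m] unfolding has_field_derivative_iff q0_def Pd_def by (simp add: add.commute)
    thus ?thesis unfolding Pq0 by (intro tendsto_rabs_zero LIM_zero)
  qed
  have lim2: "((\<lambda>q. \<bar>P d q m - q0\<bar>) \<longlongrightarrow> 0) (at q0)" for m
  proof -
    have "isCont (\<lambda>q. P d q m) q0" unfolding q0_def using DERIV_isCont[OF DERIV_P[OF d, of m]] by (simp add: add.commute)
    hence "((\<lambda>q. P d q m) \<longlongrightarrow> q0) (at q0)" using isContD Pq0 by metis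
    thus ?thesis by (intro tendsto_rabs_zero LIM_zero)
  qed
  have s2: "((\<lambda>q. \<Sum>m\<le>d. \<bar>P d q m - q0\<bar>) \<longlongrightarrow> 0) (at q0)"
    by (rule tendsto_null_sum) (rule lim2)
  have s1: "((\<lambda>q. \<Sum>m\<le>d. \<bar>(P d q m - q0) / (q - q0) - Pd d m\<bar>) \<longlongrightarrow> 0) (at q0)"
    by (rule tendsto_null_sum) (rule lim1)
  have "(\<eta> \<longlongrightarrow> 0) (at q0)"
    unfolding \<eta>_def[abs_def] using s2
    by (intro tendsto_mult_left_zero tendsto_divide_zero)
  hence limC: "(Cq \<longlongrightarrow> 0) (at q0)"
    unfolding Cq_def[abs_def] using s1
    by (intro tendsto_add_zero tendsto_mult_right_zero)
  have "((\<lambda>q. (F d q x - F0 x) / (q - q0) - G d x) \<longlongrightarrow> 0) (at q0)"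
  proof (rule Lim_null_comparison)
    show "eventually (\<lambda>q. norm ((F d q x - F0 x) / (q - q0) - G d x) \<le> Cq q * B / (B - 1)) (at q0)"
      using ev by eventually_elim (use bound in auto)
    show "((\<lambda>q. Cq q * B / (B - 1)) \<longlongrightarrow> 0) (at q0)"
      using limC by (intro tendsto_divide_zero tendsto_mult_left_zero)
  qed
  hence "((\<lambda>q. (F d q x - F d q0 x) / (q - q0)) \<longlongrightarrow> G d x) (at q0)"
    unfolding q0_def F_q0[OF d] by (rule LIM_zero_cancel)
  thus ?thesis unfolding has_field_derivative_iff q0_def .
qed



lemma alg1: fixes u Bv D y :: real assumes "Bv \<noteq> 0" "D \<noteq> 0"
  shows "Bv*Bv/D * (u/Bv*(1-u/Bv)) - y*(1-y)/D = (u*(Bv-u) - y*(1-y))/D"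
proof -
  have "u/Bv*(1-u/Bv) = u*(Bv-u)/(Bv*Bv)" using assms by (simp add: field_simps)
  hence "Bv*Bv/D * (u/Bv*(1-u/Bv)) = u*(Bv-u)/D" using assms by simp
  thus ?thesis by (simp add: diff_divide_distrib)
qed
lemma alg2: fixes G0y hz hy D B :: real assumes "D > 0" "B = D + 1"
  shows "(( B*B/D*hz - hy/D) + G0y/B)/B - hz = (hz/D + hy*(D-1)/(D*B)) + (G0y/B - hy)/B"
proof -
  have B0: "B \<noteq> 0" "D \<noteq> 0" using assms by auto
  have "(( B*B/D*hz - hy/D) + G0y/B)/B - hz - ((hz/D + hy*(D-1)/(D*B)) + (G0y/B - hy)/B) = hz * (B - D - 1) / D"
    using B0 by (simp add: field_simps)
  thus ?thesis using assms(2) by simp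
qed

lemma phi_formula:
  assumes d: "d \<ge> 1" and x: "0 \<le> x" "x < 1"
  shows "phi d x = real (d+1) * real (d+1) / real d * (x * (1 - x)) - Tm d x * (1 - Tm d x) / real d"
proof -
  define k where "k = nat \<lfloor>real (d+1) * x\<rfloor>"
  define y where "y = Tm d x"
  note df = digit_facts[where d=d, OF x, folded k_def]
  have y01: "0 \<le> y" "y \<le> 1" using Tm_range[of d x] by (auto simp: y_def)
  have "phi d x = (\<Sum>m<k. Pd d m) + Pd d k * F0 (Tm d x)"
    unfolding phi_def k_def by (rule step_sum[OF x]) (auto simp: F0_1 F0_0)
  also have "F0 (Tm d x) = y" using y01 by (simp add: F0_id y_def)
  also have "(\<Sum>m<k. Pd d m) = real k - 2 / real d * (\<Sum>m<k. real m)"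
    by (simp add: Pd_def sum_subtractf sum_distrib_left)
  also have "(\<Sum>m<k. real m) = real k * (real k - 1) / 2" by (rule gauss_real_lt)
  finally have ph: "phi d x = real k - 2 / real d * (real k * (real k - 1) / 2) + (1 - 2 * real k / real d) * y"
    by (simp add: Pd_def)
  have xe: "x = (real k + y) / real (d+1)" using df(4) by (simp add: y_def field_simps)
  have D0: "real d \<noteq> 0" using d by simp
  have B0: "real d + 1 \<noteq> 0" by (metis of_nat_Suc of_nat_eq_0_iff nat.distinct(1) add.commute)
  have L: "real k - 2 / real d * (real k * (real k - 1) / 2) + (1 - 2 * real k / real d) * y
      = (real k * real d - real k * (real k - 1) + (real d - 2 * real k) * y) / real d"
    using D0 by (simp add: field_simps)
  have R: "real (d+1) * real (d+1) / real d * ((real k + y) / real (d+1) * (1 - (real k + y) / real (d+1))) - y * (1 - y) / real d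
      = ((real k + y) * (real (d+1) - (real k + y)) - y * (1 - y)) / real d"
    by (rule alg1) (use D0 in simp_all)
  have N: "real k * real d - real k * (real k - 1) + (real d - 2 * real k) * y = (real k + y) * (real (d+1) - (real k + y)) - y * (1 - y)"
    by (simp add: algebra_simps)
  show ?thesis unfolding ph unfolding y_def[symmetric] unfolding xe L R N ..
qed

lemma h_bound: "0 \<le> x \<Longrightarrow> x \<le> 1 \<Longrightarrow> 0 \<le> x * (1 - x) \<and> x * (1 - x) \<le> (1::real) / 4"
proof -
  assume a: "0 \<le> x" "x \<le> 1"
  have "x * (1 - x) = 1/4 - (x - 1/2)^2" by (simp add: power2_eq_square algebra_simps)
  moreover have "(x - 1/2)^2 \<ge> 0" by simp
  moreover have "0 \<le> x * (1 - x)" using a by simp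
  ultimately show ?thesis by linarith
qed

lemma e_bound:
  assumes d: "d \<ge> 1" and x: "0 \<le> x" "x < 1"
  shows "\<bar>G0 d x / real (d+1) - x * (1 - x)\<bar> \<le> 1 / real d"
proof -
  define B where "B = real (d+1)"
  define e where "e z = (if 0 \<le> z \<and> z < 1 then G0 d z / B - z * (1 - z) else 0)" for z
  have B1: "B > 1" using d by (simp add: B_def)
  have dpos: "real d > 0" using d by simp
  have "\<bar>e x\<bar> \<le> (1 / (2 * real d)) * B / (B - 1)"
  proof (rule contract[where E=e and T="Tm d" and M="Kd d * B / (B - 1) + 1" and B=B])
    show "1 < B" by (rule B1)
    show "0 \<le> 1 / (2 * real d)" using dpos by simp
    show "\<bar>e z\<bar> \<le> Kd d * B / (B - 1) + 1" for z
    proof (cases "0 \<le> z \<and> z < 1")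
      case True
      have "\<bar>G0 d z\<bar> / B \<le> \<bar>G0 d z\<bar> / 1" by (rule divide_left_mono) (use B1 in auto)
      hence "\<bar>G0 d z / B\<bar> \<le> \<bar>G0 d z\<bar>" using B1 by (simp add: abs_divide)
      moreover have "\<bar>G0 d z\<bar> \<le> Kd d * B / (B - 1)" using G0_bound[OF d, of z] by (simp add: B_def)
      moreover have "\<bar>z * (1 - z)\<bar> \<le> 1" using h_bound[of z] True by auto
      moreover have "\<bar>e z\<bar> \<le> \<bar>G0 d z / B\<bar> + \<bar>z * (1 - z)\<bar>"
      proof -
        have "\<bar>e z\<bar> = \<bar>G0 d z / B - z * (1 - z)\<bar>" using True by (simp add: e_def)
        thus ?thesis using abs_triangle_ineq4[of "G0 d z / B" "z * (1 - z)"] by simp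
      qed
      ultimately show ?thesis by linarith
    next
      case False
      have "0 \<le> Kd d * B / (B - 1)" using B1 Kd_nonneg[of d] by simp
      thus ?thesis using False by (auto simp: e_def)
    qed
    show "\<bar>e z\<bar> \<le> 1 / (2 * real d) + \<bar>e (Tm d z)\<bar> / B" for z
    proof (cases "0 \<le> z \<and> z < 1")
      case True
      define y where "y = Tm d z"
      have y01: "0 \<le> y" "y < 1" using Tm_range[of d z] by (auto simp: y_def)
      have ey: "e y = G0 d y / B - y * (1 - y)" using y01 by (simp add: e_def)
      have ez: "e z = G0 d z / B - z * (1 - z)" using True by (simp add: e_def)
      have rec: "G0 d z = phi d z + G0 d y / B" using G0_rec[OF d, of z] by (simp add: y_def B_def)
      have ph: "phi d z = B * B / real d * (z * (1 - z)) - y * (1 - y) / real d"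
        using phi_formula[OF d True[THEN conjunct1] True[THEN conjunct2]] by (simp add: y_def B_def)
      have eq: "e z = (z * (1 - z) / real d + y * (1 - y) * (real d - 1) / (real d * B)) + e y / B"
        unfolding ez ey rec ph by (rule alg2) (use dpos in \<open>simp_all add: B_def\<close>)
      have hz: "0 \<le> z * (1 - z)" "z * (1 - z) \<le> 1/4" using h_bound[of z] True by auto
      have hy: "0 \<le> y * (1 - y)" "y * (1 - y) \<le> 1/4" using h_bound[of y] y01 by auto
      have t1: "0 \<le> z * (1 - z) / real d" "z * (1 - z) / real d \<le> 1 / (4 * real d)"
        using hz dpos by (auto simp: divide_le_eq)
      have dB: "real d \<le> B" by (simp add: B_def)
      have t2a: "0 \<le> (real d - 1) / (real d * B)" "(real d - 1) / (real d * B) \<le> 1 / real d"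
        using d dpos B1 dB by (auto simp: divide_le_eq field_simps)
      have t2: "0 \<le> y * (1 - y) * (real d - 1) / (real d * B)" "y * (1 - y) * (real d - 1) / (real d * B) \<le> 1 / (4 * real d)"
      proof -
        have "y * (1 - y) * (real d - 1) / (real d * B) = y * (1 - y) * ((real d - 1) / (real d * B))" by simp
        moreover have "y * (1 - y) * ((real d - 1) / (real d * B)) \<le> 1/4 * (1 / real d)"
          using hy t2a by (intro mult_mono) auto
        moreover have "0 \<le> y * (1 - y) * ((real d - 1) / (real d * B))" using hy(1) t2a(1) by (rule mult_nonneg_nonneg)
        ultimately show "0 \<le> y * (1 - y) * (real d - 1) / (real d * B)" "y * (1 - y) * (real d - 1) / (real d * B) \<le> 1 / (4 * real d)"
          by auto
      qed
      have sb: "\<bar>z * (1 - z) / real d + y * (1 - y) * (real d - 1) / (real d * B)\<bar> \<le> 1 / (2 * real d)"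
        using t1 t2 by (simp add: abs_le_iff)
      show ?thesis unfolding y_def[symmetric] by (rule abs_helper[OF eq sb]) (use B1 in simp)
    next
      case False
      have "e z = 0" using False by (auto simp: e_def)
      moreover have "0 \<le> \<bar>e (Tm d z)\<bar> / B" using B1 by simp
      moreover have "0 \<le> 1 / (2 * real d)" using dpos by simp
      ultimately show ?thesis by simp
    qed
  qed
  also have "(1 / (2 * real d)) * B / (B - 1) \<le> 1 / real d"
    using dpos d by (simp add: B_def field_simps)
  finally show ?thesis using x by (simp add: e_def B_def)
qed



theorem mainTheorem10:
  shows "(\<forall>d::nat. d \<ge> 1 \<longrightarrow> (\<forall>x\<in>{0..1::real}.
            (\<exists>D. ((\<lambda>q. F d q x) has_real_derivative D) (at (1 / real (d + 1))))))
       \<and> ((\<lambda>d. SUP x\<in>{0..1::real}. ereal \<bar>Ttilde d x - x * (1 - x)\<bar>) \<longlonglongrightarrow> 0)"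
proof
  show "\<forall>d::nat. d \<ge> 1 \<longrightarrow> (\<forall>x\<in>{0..1::real}.
            (\<exists>D. ((\<lambda>q. F d q x) has_real_derivative D) (at (1 / real (d + 1)))))"
    using DERIV_F by blast
  have Tt: "Ttilde d x = G d x / real (d+1)" if d: "d \<ge> 1" for d x
    unfolding Ttilde_def DERIV_imp_deriv[OF DERIV_F[OF d]] by simp
  have bnd: "\<bar>Ttilde d x - x * (1 - x)\<bar> \<le> 1 / real d" if d: "d \<ge> 1" and x: "x \<in> {0..1}" for d x
  proof (cases "x < 1")
    case True
    hence "G d x = G0 d x" using x by (simp add: G_def)
    thus ?thesis unfolding Tt[OF d] using e_bound[OF d _ True] x by simp
  next
    case False
    hence "x = 1" using x by simp
    thus ?thesis unfolding Tt[OF d] by (simp add: G_def)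
  qed
  have up: "(SUP x\<in>{0..1::real}. ereal \<bar>Ttilde d x - x * (1 - x)\<bar>) \<le> ereal (1 / real d)" if d: "d \<ge> 1" for d
    by (rule SUP_least) (use bnd[OF d] in simp)
  have lo: "0 \<le> (SUP x\<in>{0..1::real}. ereal \<bar>Ttilde d x - x * (1 - x)\<bar>)" for d
    by (rule SUP_upper2[of 0]) auto
  have lim: "(\<lambda>d. ereal (1 / real d)) \<longlonglongrightarrow> 0"
    using tendsto_ereal[OF lim_inverse_n'] by (simp add: zero_ereal_def)
  show "(\<lambda>d. SUP x\<in>{0..1::real}. ereal \<bar>Ttilde d x - x * (1 - x)\<bar>) \<longlonglongrightarrow> 0"
  proof (rule tendsto_sandwich[OF _ _ tendsto_const lim])
    show "eventually (\<lambda>n. 0 \<le> (SUP x\<in>{0..1::real}. ereal \<bar>Ttilde n x - x * (1 - x)\<bar>)) sequentially"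
      using lo by simp
    show "eventually (\<lambda>n. (SUP x\<in>{0..1::real}. ereal \<bar>Ttilde n x - x * (1 - x)\<bar>) \<le> ereal (1 / real n)) sequentially"
      using eventually_ge_at_top[of 1] by eventually_elim (rule up)
  qed
qed

end
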